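(* Let $\{\omega_m\}$ be a sequence of positive real numbers with $\omega_m\to\infty$, and let $z_m=a_m-\mathrm{i}b_m$ with $a_m,b_m\geq 0$. Suppose there exist constants $c_1, c_2>0$ such that $b_m\geq c_1 \omega_m$ and $b_m\geq c_2 a_m$ for all $m$. Then for all sufficiently large $m$, $z=z_m$ satisfies neither of the equations \[ \frac{\omega_m-z}{\omega_m+z}= e^{-\mathrm{i}z},\qquad \frac{\omega_m-z}{\omega_m+z}= -e^{-\mathrm{i}z}. \] *)

theory Defs
  imports "HOL-Analysis.Analysis"
begin

end

theory Submission
  imports Defs
begin

lemma aux:
  fixes w a b c1 c2 K :: real and z :: complex
  assumes w: "w > 0" and a: "a \<ge> 0" and b1: "b \<ge> c1 * w" and b2: "b \<ge> c2 * a"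
    and c1: "c1 > 0" and c2: "c2 > 0" and K: "K = (1/c1 + 1/c2)^2 + 1"
    and E: "exp (2*b) > K" and z: "z = Complex a (- b)"
  shows "cmod ((of_real w - z) / (of_real w + z)) > exp (- b)"
proof -
  have bpos: "b > 0" using b1 c1 w by (smt (verit) mult_pos_pos)
  have wle: "w \<le> b / c1" using b1 c1 by (simp add: field_simps mult.commute)
  have ale: "a \<le> b / c2" using b2 c2 by (simp add: field_simps mult.commute)
  have n1: "cmod (of_real w - z) ^ 2 = (w - a)^2 + b^2"
    using z by (simp add: cmod_def)
  have n2: "cmod (of_real w + z) ^ 2 = (w + a)^2 + b^2"
    using z by (simp add: cmod_def)
  have "w + a \<le> b * (1/c1 + 1/c2)" using wle ale by (simp add: field_simps)
  hence "(w + a)^2 \<le> (b * (1/c1 + 1/c2))^2" using w a by (intro power_mono) auto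
  hence "(w + a)^2 \<le> b^2 * (1/c1 + 1/c2)^2" by (simp add: power_mult_distrib)
  hence n2le: "cmod (of_real w + z) ^ 2 \<le> K * b^2" using n2 K
    by (simp add: algebra_simps)
  have n1ge: "cmod (of_real w - z) ^ 2 \<ge> b^2" using n1 by simp
  have n2pos: "cmod (of_real w + z) > 0" using n2 bpos
    by (smt (verit) norm_ge_zero power2_less_0 zero_less_power2 power_zero_numeral)
  have "exp (-b) ^ 2 = exp (- (2*b))" by (simp add: power2_eq_square flip: exp_add)
  also have "\<dots> = 1 / exp (2*b)" by (simp add: exp_minus field_simps)
  finally have e2: "exp (-b) ^ 2 * exp (2*b) = 1" by simp
  have Kpos: "K > 0" using K by (smt (verit) zero_le_power2)
  have "(exp (-b) * cmod (of_real w + z))^2 = exp (-b)^2 * cmod (of_real w + z)^2"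
    by (simp add: power_mult_distrib)
  also have "\<dots> \<le> exp (-b)^2 * (K * b^2)" using n2le by (intro mult_left_mono) auto
  also have "\<dots> < exp (-b)^2 * (exp (2*b) * b^2)"
    using E bpos by (intro mult_strict_left_mono mult_strict_right_mono) auto
  also have "\<dots> = b^2" using e2 by (simp add: algebra_simps)
  also have "\<dots> \<le> cmod (of_real w - z) ^ 2" using n1ge .
  finally have "exp (-b) * cmod (of_real w + z) < cmod (of_real w - z)"
    using power_less_imp_less_base by (metis norm_ge_zero)
  thus ?thesis using n2pos by (simp add: norm_divide field_simps)
qed

theorem lemma5p2:
  fixes \<omega> a b :: "nat \<Rightarrow> real" and z :: "nat \<Rightarrow> complex" and c1 c2 :: real
  assumes "\<And>m. \<omega> m > 0"
    and "filterlim \<omega> at_top sequentially"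
    and "\<And>m. z m = Complex (a m) (- b m)"
    and "\<And>m. a m \<ge> 0" and "\<And>m. b m \<ge> 0"
    and "c1 > 0" and "c2 > 0"
    and "\<And>m. b m \<ge> c1 * \<omega> m" and "\<And>m. b m \<ge> c2 * a m"
  shows "\<forall>\<^sub>F m in sequentially.
           (of_real (\<omega> m) - z m) / (of_real (\<omega> m) + z m) \<noteq> exp (- \<i> * z m) \<and>
           (of_real (\<omega> m) - z m) / (of_real (\<omega> m) + z m) \<noteq> - exp (- \<i> * z m)"
proof -
  define K where "K = (1/c1 + 1/c2)^2 + (1::real)"
  have Kpos: "K > 0" unfolding K_def by (smt (verit) zero_le_power2)
  have ev: "\<forall>\<^sub>F m in sequentially. \<omega> m \<ge> (ln K + 1) / c1"
    using assms(2) by (simp add: filterlim_at_top)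
  show ?thesis
    using ev
  proof (rule eventually_mono)
    fix m assume h: "\<omega> m \<ge> (ln K + 1) / c1"
    have "b m \<ge> ln K + 1"
      using h assms(8)[of m] assms(6) by (smt (verit) divide_le_eq mult.commute)
    hence "exp (2 * b m) > exp (ln K)" using assms(5)[of m] by simp
    hence E: "exp (2 * b m) > K" using Kpos by simp
    have g: "cmod ((of_real (\<omega> m) - z m) / (of_real (\<omega> m) + z m)) > exp (- b m)"
      by (rule aux[OF assms(1) assms(4) assms(8) assms(9) assms(6) assms(7) K_def E assms(3)])
    have ne: "cmod (exp (- \<i> * z m)) = exp (- b m)" using assms(3)[of m]
      by (simp add: norm_exp_eq_Re)
    show "(of_real (\<omega> m) - z m) / (of_real (\<omega> m) + z m) \<noteq> exp (- \<i> * z m) \<and>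
           (of_real (\<omega> m) - z m) / (of_real (\<omega> m) + z m) \<noteq> - exp (- \<i> * z m)"
      using g ne by (metis less_irrefl norm_minus_cancel)
  qed
qed

end
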